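(* Let $\lambda>0$ be a real number and let $\mathbf{H}$ be the $4\times 8$ binary matrix $$\mathbf{H}=\begin{bmatrix}1&1&1&1&0&0&0&0\\0&0&1&1&1&1&0&0\\0&0&0&0&1&1&1&1\\0&1&0&1&0&1&0&1\end{bmatrix}.$$ For any $\mathbf{k}_1\in\{0,1\}^4$, let $\mathbf{v}_1:=\mathrm{Encode}_{E'_8}(\mathbf{k}_1)=\lambda\cdot(\mathbf{k}_1\mathbf{H}\bmod 2)\in[0,\lambda]^8$. For any $\mathbf{v}_2\in\mathbb{R}^8$, let $\mathbf{k}_2:=\mathrm{Decode}_{E'_8}(\mathbf{v}_2)$ (the decoding algorithm described in the context). If $\|\mathbf{v}_2-\mathbf{v}_1\|_{2\lambda,2}<\lambda$, then $\mathbf{k}_1=\mathbf{k}_2$.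
   Context: Norms: for a positive real $Q$ and $w\in\mathbb{R}$, $w\bmod^{\pm}Q$ denotes the representative of $w$ modulo $Q$ in $[-Q/2,Q/2)$, $\|w\|_{Q,\infty}:=|w\bmod^{\pm}Q|$ and $\|w\|_{Q,2}:=\|w\|_{Q,\infty}$; for a vector $\mathbf{w}=(w_0,\dots,w_{m-1})$, $\|\mathbf{w}\|_{Q,2}:=\sqrt{\sum_i\|w_i\|_{Q,\infty}^2}$. The scalable $E_8$ lattice is $E'_8=\lambda\cdot[C\cup(C+\mathbf{c})]$ where $C=\{(x_1,x_1,x_2,x_2,x_3,x_3,x_4,x_4)\in\{0,1\}^8:\sum x_i\equiv 0\bmod 2\}$ and $\mathbf{c}=(0,1,0,1,0,1,0,1)$; equivalently $E'_8=\{\lambda(\mathbf{k}\mathbf{H}\bmod 2):\mathbf{k}\in\{0,1\}^4\}$. Subroutine $\mathrm{Decode}_{C'}(\mathbf{x})$ for $\mathbf{x}=(x_0,\dots,x_7)\in\mathbb{R}^8$: set $mind:=+\infty$, $mini:=0$, $\mathsf{TotalCost}:=0$. For $i=0,\dots,3$: let $c_0:=\|x_{2i}\|_{2\lambda,2}^2+\|x_{2i+1}\|_{2\lambda,2}^2$ and $c_1:=\|x_{2i}-\lambda\|_{2\lambda,2}^2+\|x_{2i+1}-\lambda\|_{2\lambda,2}^2$; let $k_i:=\arg\min\{c_0,c_1\}\in\{0,1\}$; add $c_{k_i}$ to $\mathsf{TotalCost}$; if $c_{1-k_i}-c_{k_i}<mind$, set $mind:=c_{1-k_i}-c_{k_i}$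 and $mini:=i$. After the loop, if $k_0+k_1+k_2+k_3$ is odd, replace $k_{mini}$ by $1-k_{mini}$ and add $mind$ to $\mathsf{TotalCost}$. Output $((k_0,k_1,k_2,k_3),\mathsf{TotalCost})$. Algorithm $\mathrm{Decode}_{E'_8}(\mathbf{x})$: compute $(\mathbf{k}_0',T_0):=\mathrm{Decode}_{C'}(\mathbf{x})$ and $(\mathbf{k}_1',T_1):=\mathrm{Decode}_{C'}(\mathbf{x}-\lambda\mathbf{c})$; let $b:=\arg\min\{T_0,T_1\}$; write $\mathbf{k}'_b=(k_0,k_1,k_2,k_3)$ and output $(k_0,\,k_1\oplus k_0,\,k_3,\,b)\in\{0,1\}^4$. *)

theory Defs
  imports Complex_Main "HOL-Library.Extended_Real"
begin

definition modpm :: "real \<Rightarrow> real \<Rightarrow> real" where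
  "modpm Q w = w - Q * of_int \<lfloor>w / Q + 1/2\<rfloor>"

definition normQinf :: "real \<Rightarrow> real \<Rightarrow> real" where
  "normQinf Q w = \<bar>modpm Q w\<bar>"

definition normQ2s :: "real \<Rightarrow> real \<Rightarrow> real" where
  "normQ2s Q w = normQinf Q w"

definition normQ2 :: "real \<Rightarrow> real list \<Rightarrow> real" where
  "normQ2 Q ws = sqrt (\<Sum>i<length ws. (normQinf Q (ws ! i))^2)"

definition Hmat :: "nat list list" where
  "Hmat = [[1,1,1,1,0,0,0,0],
           [0,0,1,1,1,1,0,0],
           [0,0,0,0,1,1,1,1],
           [0,1,0,1,0,1,0,1]]"

definition encodeE8 :: "real \<Rightarrow> nat list \<Rightarrow> real list" where
  "encodeE8 lam k = map (\<lambda>j. lam * real ((\<Sum>i<4. k ! i * Hmat ! i ! j) mod 2)) [0..<8]"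

definition cvec :: "real list" where
  "cvec = [0,1,0,1,0,1,0,1]"

text \<open>One loop iteration of Decode_C'; state = (k list so far, mind, mini, TotalCost).\<close>
definition decC_step :: "real \<Rightarrow> real list \<Rightarrow> nat list \<times> ereal \<times> nat \<times> real \<Rightarrow> nat
    \<Rightarrow> nat list \<times> ereal \<times> nat \<times> real" where
  "decC_step lam x st i =
    (case st of (ks, mind, mini, tot) \<Rightarrow>
      let c0 = (normQ2s (2*lam) (x ! (2*i)))^2 + (normQ2s (2*lam) (x ! (2*i+1)))^2;
          c1 = (normQ2s (2*lam) (x ! (2*i) - lam))^2 + (normQ2s (2*lam) (x ! (2*i+1) - lam))^2;
          k = (if c1 < c0 then (1::nat) else 0);
          ck = (if k = 0 then c0 else c1);
          co = (if k = 0 then c1 else c0);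
          upd = (ereal (co - ck) < mind)
      in (ks @ [k], (if upd then ereal (co - ck) else mind), (if upd then i else mini), tot + ck))"

definition decodeC :: "real \<Rightarrow> real list \<Rightarrow> nat list \<times> real" where
  "decodeC lam x =
    (case foldl (decC_step lam x) ([], PInfty, 0, 0) [0..<4] of (ks, mind, mini, tot) \<Rightarrow>
      if odd (sum_list ks)
      then (ks[mini := 1 - ks ! mini], tot + real_of_ereal mind)
      else (ks, tot))"

definition decodeE8 :: "real \<Rightarrow> real list \<Rightarrow> nat list" where
  "decodeE8 lam x =
    (let (k0', T0) = decodeC lam x;
         (k1', T1) = decodeC lam (map2 (\<lambda>a c. a - lam * c) x cvec);
         b = (if T1 < T0 then (1::nat) else 0);
         kb = (if b = 0 then k0' else k1')
     in [kb ! 0, (kb ! 1 + kb ! 0) mod 2, kb ! 3, b])"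

end

theory Submission
  imports Defs
begin

definition cc :: "real \<Rightarrow> real list \<Rightarrow> nat \<Rightarrow> nat \<Rightarrow> real" where
 "cc lam x i b = (if b = 0 then (normQ2s (2*lam) (x ! (2*i)))^2 + (normQ2s (2*lam) (x ! (2*i+1)))^2
    else (normQ2s (2*lam) (x ! (2*i) - lam))^2 + (normQ2s (2*lam) (x ! (2*i+1) - lam))^2)"

definition kk where "kk lam x i = (if cc lam x i 1 < cc lam x i 0 then (1::nat) else 0)"
definition mm where "mm lam x i = min (cc lam x i 0) (cc lam x i 1)"
definition dd where "dd lam x i = \<bar>cc lam x i 1 - cc lam x i 0\<bar>"

lemma step_alt: "decC_step lam x (ks, mind, mini, tot) i =
      (ks @ [kk lam x i], (if ereal (dd lam x i) < mind then ereal (dd lam x i) else mind),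
        (if ereal (dd lam x i) < mind then i else mini), tot + mm lam x i)"
  unfolding decC_step_def kk_def mm_def dd_def by (auto simp: cc_def Let_def)

lemma fold_inv:
  "foldl (decC_step lam x) ([], PInfty, 0, 0) [0..<n] = (ks, mind, mini, tot) \<Longrightarrow>
   length ks = n \<and> (\<forall>i<n. ks!i = kk lam x i) \<and> tot = (\<Sum>i<n. mm lam x i) \<and>
   (n = 0 \<longrightarrow> mind = PInfty) \<and> (n > 0 \<longrightarrow> mini < n \<and> mind = ereal (dd lam x mini)) \<and>
   (\<forall>i<n. mind \<le> ereal (dd lam x i))"
proof (induction n arbitrary: ks mind mini tot)
  case 0
  then show ?case by simp
next
  case (Suc n)
  obtain ks' mind' mini' tot' where F: "foldl (decC_step lam x) ([], PInfty, 0, 0) [0..<n] = (ks', mind', mini', tot')"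
    by (metis prod_cases4)
  note IH = Suc.IH[OF F]
  have E: "(ks, mind, mini, tot) = decC_step lam x (ks', mind', mini', tot') n"
    using Suc.prems F by simp
  show ?case
  proof (cases "ereal (dd lam x n) < mind'")
    case True
    with E have *: "ks = ks' @ [kk lam x n]" "mind = ereal (dd lam x n)" "mini = n" "tot = tot' + mm lam x n"
      by (simp_all add: step_alt)
    show ?thesis using IH True unfolding *
      by (auto simp: nth_append less_Suc_eq)
  next
    case False
    with E have *: "ks = ks' @ [kk lam x n]" "mind = mind'" "mini = mini'" "tot = tot' + mm lam x n"
      by (simp_all add: step_alt)
    have "n > 0" using False IH by (cases n) auto
    then show ?thesis using IH False unfolding *
      by (auto simp: nth_append less_Suc_eq not_less)
  qed
qed
lemma cc_kk: "cc lam x i (kk lam x i) = mm lam x i"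
  unfolding kk_def mm_def by auto
lemma cc_other: "a \<le> 1 \<Longrightarrow> a \<noteq> kk lam x i \<Longrightarrow> cc lam x i a = mm lam x i + dd lam x i"
proof -
  assume "a \<le> 1" "a \<noteq> kk lam x i"
  then have "a = 0 \<or> a = 1" by auto
  then show ?thesis using \<open>a \<noteq> kk lam x i\<close> unfolding kk_def mm_def dd_def by (auto split: if_splits)
qed
lemma cc_ge: "a \<le> 1 \<Longrightarrow> cc lam x i a \<ge> mm lam x i"
  using cc_kk cc_other[of a lam x i] dd_def by (cases "a = kk lam x i") auto
lemma kk_le: "kk lam x i \<le> 1" unfolding kk_def by auto

lemma decodeC_spec:
  assumes "decodeC lam x = (ks, T)"
  shows "length ks = 4 \<and> (\<forall>i<4. ks!i \<le> 1) \<and> even (ks!0+ks!1+ks!2+ks!3) \<and>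
     T = cc lam x 0 (ks!0) + cc lam x 1 (ks!1) + cc lam x 2 (ks!2) + cc lam x 3 (ks!3) \<and>
     (\<forall>a0 a1 a2 a3. a0 \<le> 1 \<longrightarrow> a1 \<le> 1 \<longrightarrow> a2 \<le> 1 \<longrightarrow> a3 \<le> 1 \<longrightarrow> even (a0+a1+a2+a3) \<longrightarrow>
        T \<le> cc lam x 0 a0 + cc lam x 1 a1 + cc lam x 2 a2 + cc lam x 3 a3)"
proof -
  obtain ks' mind mini tot where F: "foldl (decC_step lam x) ([], PInfty, 0, 0) [0..<4] = (ks', mind, mini, tot)"
    by (metis prod_cases4)
  note I = fold_inv[OF F]
  have S4: "(\<Sum>i<4. f i) = f (0::nat) + f 1 + f 2 + (f 3::real)" for f
    by (simp add: eval_nat_numeral)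
  note I1 = I[THEN conjunct1] and I2 = I[THEN conjunct2, THEN conjunct1]
    and I3 = I[THEN conjunct2, THEN conjunct2, THEN conjunct1]
    and I5 = I[THEN conjunct2, THEN conjunct2, THEN conjunct2, THEN conjunct2, THEN conjunct1]
    and I6 = I[THEN conjunct2, THEN conjunct2, THEN conjunct2, THEN conjunct2, THEN conjunct2]
  have L4: "ks' = [kk lam x 0, kk lam x 1, kk lam x 2, kk lam x 3]"
  proof (rule nth_equalityI)
    show "length ks' = length [kk lam x 0, kk lam x 1, kk lam x 2, kk lam x 3]" using I1 by simp
    fix i assume "i < length ks'"
    then have "i < 4" using I1 by simp
    then have "i = 0 \<or> i = 1 \<or> i = 2 \<or> i = 3" by auto
    then show "ks' ! i = [kk lam x 0, kk lam x 1, kk lam x 2, kk lam x 3] ! i"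
      using I2 by auto
  qed
  have tot: "tot = mm lam x 0 + mm lam x 1 + mm lam x 2 + mm lam x 3" using I3 S4 by simp
  have mn: "mini < 4" "mind = ereal (dd lam x mini)" using I5 by simp_all
  have mle: "dd lam x mini \<le> dd lam x i" if "i < 4" for i
  proof -
    have "mind \<le> ereal (dd lam x i)" using I6 that by simp
    then show ?thesis using mn by simp
  qed
  have ge: "\<And>i a. a \<le> 1 \<Longrightarrow> cc lam x i a \<ge> mm lam x i" by (rule cc_ge)
  note kl = kk_le[of lam x]
  show ?thesis
  proof (cases "odd (sum_list ks')")
    case False
    then have ks: "ks = ks'" and T: "T = tot" using assms F unfolding decodeC_def by auto
    show ?thesis
    proof (intro conjI allI impI)
      fix a0 a1 a2 a3 :: nat
      assume "a0 \<le> 1" "a1 \<le> 1" "a2 \<le> 1" "a3 \<le> 1"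
      then show "T \<le> cc lam x 0 a0 + cc lam x 1 a1 + cc lam x 2 a2 + cc lam x 3 a3"
        using ge[of a0 0] ge[of a1 1] ge[of a2 2] ge[of a3 3] T tot by linarith
    next
      show "length ks = 4" using I1 by (simp add: ks)
    next
      fix i :: nat assume "i < 4"
      then show "ks ! i \<le> 1" using I2 kl[of i] by (simp add: ks)
    next
      show "even (ks!0 + ks!1 + ks!2 + ks!3)" using False by (simp add: ks L4 add.assoc)
    next
      show "T = cc lam x 0 (ks!0) + cc lam x 1 (ks!1) + cc lam x 2 (ks!2) + cc lam x 3 (ks!3)"
        unfolding T tot ks L4 by (simp add: cc_kk)
    qed
  next
    case True
    then have ks: "ks = ks'[mini := 1 - ks' ! mini]" and T: "T = tot + dd lam x mini"
      using assms F mn unfolding decodeC_def by auto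
    have ncc: "cc lam x i (1 - kk lam x i) = mm lam x i + dd lam x i" for i
    proof -
      have "kk lam x i = 0 \<or> kk lam x i = 1" using kl[of i] by auto
      then show ?thesis by (intro cc_other) auto
    qed
    have m4: "mini = 0 \<or> mini = 1 \<or> mini = 2 \<or> mini = 3" using mn(1) by auto
    have kse: "ks ! j = (if mini = j then 1 - kk lam x j else kk lam x j)" if "j < 4" for j
      using that I1 I2 mn(1) by (simp add: ks nth_list_update)
    have cj: "cc lam x j (ks!j) = mm lam x j + (if mini = j then dd lam x j else 0)" if "j < 4" for j
    proof (cases "mini = j")
      case True
      then have "ks ! j = 1 - kk lam x j" using kse[OF that] by simp
      then show ?thesis using ncc[of j] True by simp
    next
      case False
      then have "ks ! j = kk lam x j" using kse[OF that] by simp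
      then show ?thesis using cc_kk[of lam x j] False by simp
    qed
    have dsum: "dd lam x mini = (if mini = 0 then dd lam x 0 else 0) + (if mini = 1 then dd lam x 1 else 0)
       + (if mini = 2 then dd lam x 2 else 0) + (if mini = 3 then dd lam x 3 else 0)"
      using m4 by (elim disjE) simp_all
    show ?thesis
    proof (intro conjI allI impI)
      fix a0 a1 a2 a3 :: nat
      assume a: "a0 \<le> 1" "a1 \<le> 1" "a2 \<le> 1" "a3 \<le> 1" "even (a0+a1+a2+a3)"
      have "a0 \<noteq> kk lam x 0 \<or> a1 \<noteq> kk lam x 1 \<or> a2 \<noteq> kk lam x 2 \<or> a3 \<noteq> kk lam x 3"
        using True a(5) unfolding L4 by auto
      moreover have g: "cc lam x 0 a0 \<ge> mm lam x 0" "cc lam x 1 a1 \<ge> mm lam x 1" "cc lam x 2 a2 \<ge> mm lam x 2" "cc lam x 3 a3 \<ge> mm lam x 3"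
        using ge a by auto
      moreover have m: "dd lam x mini \<le> dd lam x 0" "dd lam x mini \<le> dd lam x 1" "dd lam x mini \<le> dd lam x 2" "dd lam x mini \<le> dd lam x 3"
        using mle by auto
      ultimately show "T \<le> cc lam x 0 a0 + cc lam x 1 a1 + cc lam x 2 a2 + cc lam x 3 a3"
      proof (elim disjE)
        assume "a0 \<noteq> kk lam x 0" then have "cc lam x 0 a0 = mm lam x 0 + dd lam x 0" using cc_other a by auto
        then show ?thesis using g m T tot by linarith
      next
        assume "a1 \<noteq> kk lam x 1" then have "cc lam x 1 a1 = mm lam x 1 + dd lam x 1" using cc_other a by auto
        then show ?thesis using g m T tot by linarith
      next
        assume "a2 \<noteq> kk lam x 2" then have "cc lam x 2 a2 = mm lam x 2 + dd lam x 2" using cc_other a by auto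
        then show ?thesis using g m T tot by linarith
      next
        assume "a3 \<noteq> kk lam x 3" then have "cc lam x 3 a3 = mm lam x 3 + dd lam x 3" using cc_other a by auto
        then show ?thesis using g m T tot by linarith
      qed
    next
      show "T = cc lam x 0 (ks!0) + cc lam x 1 (ks!1) + cc lam x 2 (ks!2) + cc lam x 3 (ks!3)"
        unfolding T tot using cj[of 0] cj[of 1] cj[of 2] cj[of 3] dsum by simp
    next
      show "length ks = 4" using I1 by (simp add: ks)
    next
      fix i :: nat assume "i < 4"
      then show "ks ! i \<le> 1" using kse[of i] kl[of i] by (cases "mini = i") simp_all
    next
      have k01: "kk lam x j = 0 \<or> kk lam x j = 1" for j using kl[of j] by auto
      have od: "odd (kk lam x 0 + kk lam x 1 + kk lam x 2 + kk lam x 3)" using True by (simp add: L4 add.assoc)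
      show "even (ks!0 + ks!1 + ks!2 + ks!3)"
        using m4 kse[of 0] kse[of 1] kse[of 2] kse[of 3] k01[of 0] k01[of 1] k01[of 2] k01[of 3] od
        by (elim disjE) simp_all
    qed
  qed
qed


lemma modpm_range: assumes "Q > 0" shows "- Q/2 \<le> modpm Q w \<and> modpm Q w < Q/2"
proof -
  define f where "f = \<lfloor>w / Q + 1/2\<rfloor>"
  have "of_int f \<le> w/Q + 1/2" "w/Q + 1/2 < of_int f + 1" unfolding f_def by linarith+
  then have "Q * of_int f \<le> w + Q/2" "w + Q/2 < Q * of_int f + Q" using assms
    by (auto simp: field_simps)
  then show ?thesis unfolding modpm_def f_def[symmetric] by auto
qed

lemma modpm_unique: assumes "Q > 0" "- Q/2 \<le> r" "r < Q/2" "w = r + Q * of_int n"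
  shows "modpm Q w = r"
proof -
  have e: "w / Q + 1/2 = (r/Q + 1/2) + of_int n" using assms by (auto simp: field_simps)
  have z: "\<lfloor>r/Q + 1/2\<rfloor> = 0" using assms by (auto simp: floor_eq_iff field_simps)
  have "\<lfloor>w / Q + 1/2\<rfloor> = \<lfloor>(r/Q + 1/2) + of_int n\<rfloor>" by (simp only: e)
  also have "\<dots> = n" using z by (simp add: floor_add_int)
  finally have "\<lfloor>w / Q + 1/2\<rfloor> = n" .
  then show ?thesis using assms unfolding modpm_def by simp
qed

lemma modpm_eq: assumes "Q > 0" shows "\<exists>n. w = modpm Q w + Q * of_int n"
  unfolding modpm_def by auto

lemma nq_even: assumes "lam > 0" shows "normQinf (2*lam) (y - 2*lam * of_int m) = normQinf (2*lam) y"
proof -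
  obtain n where n: "y = modpm (2*lam) y + 2*lam * of_int n" using modpm_eq assms by (metis mult_pos_pos zero_less_numeral)
  have "modpm (2*lam) (y - 2*lam * of_int m) = modpm (2*lam) y"
    apply (rule modpm_unique[where n = "n - m"])
    using modpm_range[of "2*lam" y] assms n by (auto simp: algebra_simps)
  then show ?thesis unfolding normQinf_def by simp
qed

lemma nq_odd: assumes "lam > 0" shows "normQinf (2*lam) (y - lam) = lam - normQinf (2*lam) y"
proof -
  obtain n where n: "y = modpm (2*lam) y + 2*lam * of_int n" using modpm_eq assms by (metis mult_pos_pos zero_less_numeral)
  have r: "- lam \<le> modpm (2*lam) y" "modpm (2*lam) y < lam" using modpm_range[of "2*lam" y] assms by auto
  show ?thesis
  proof (cases "modpm (2*lam) y \<ge> 0")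
    case True
    have "modpm (2*lam) (y - lam) = modpm (2*lam) y - lam"
      apply (rule modpm_unique[where n = "n"])
      using r True assms n by (auto simp: algebra_simps)
    then show ?thesis unfolding normQinf_def using True r by simp
  next
    case False
    have "modpm (2*lam) (y - lam) = modpm (2*lam) y + lam"
      apply (rule modpm_unique[where n = "n - 1"])
      using r False assms n by (auto simp: algebra_simps)
    then show ?thesis unfolding normQinf_def using False r by simp
  qed
qed

lemma nq_shift: assumes "lam > 0"
  shows "normQinf (2*lam) (y - lam * of_int t) = (if even t then normQinf (2*lam) y else lam - normQinf (2*lam) y)"
proof (cases "even t")
  case True
  then obtain m where "t = 2*m" by auto
  then show ?thesis using nq_even[OF assms, of y m] True by (simp add: algebra_simps)
next
  case False
  then obtain m where m: "t = 2*m + 1" by (metis oddE)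
  have e: "y - lam * of_int t = (y - 2*lam*of_int m) - lam" by (simp add: m algebra_simps)
  have "normQinf (2*lam) (y - lam * of_int t) = normQinf (2*lam) ((y - 2*lam*of_int m) - lam)" by (simp only: e)
  then show ?thesis using nq_odd[OF assms, of "y - 2*lam*of_int m"] nq_even[OF assms, of y m] False by simp
qed

lemma nq_bits: assumes "lam > 0"
  shows "(normQinf (2*lam) (v - lam * real b))^2 =
    (if even (b + c) then (normQinf (2*lam) (v - lam * real c))^2 else (lam - normQinf (2*lam) (v - lam * real c))^2)"
proof -
  have e: "v - lam * real b = (v - lam * real c) - lam * of_int (int b - int c)" by (simp add: algebra_simps)
  have p: "even (int b - int c) \<longleftrightarrow> even (b + c)"
    by (metis even_add even_diff even_of_nat)
  have "normQinf (2*lam) (v - lam * real b) = (if even (int b - int c) then normQinf (2*lam) (v - lam * real c) else lam - normQinf (2*lam) (v - lam * real c))"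
    unfolding e by (rule nq_shift[OF assms])
  then show ?thesis unfolding p by simp
qed

lemma weightL:
  fixes u :: "nat \<Rightarrow> real" and \<delta> :: "nat \<Rightarrow> bool"
  assumes D: "(\<Sum>j<8. (u j)^2) < lam^2" and W: "4 \<le> (\<Sum>j<8. if \<delta> j then 1 else 0::nat)"
  shows "(\<Sum>j<8. (u j)^2) < (\<Sum>j<8. if \<delta> j then (lam - u j)^2 else (u j)^2)"
proof -
  have t: "(if \<delta> j then (lam - u j)^2 else (u j)^2) \<ge> (lam^2/2) * (if \<delta> j then 1 else 0) - (u j)^2" for j
  proof -
    have "0 \<le> (lam - 2 * u j)^2" by simp
    then show ?thesis by (auto simp: power2_eq_square algebra_simps)
  qed
  have A: "(\<Sum>j<8. if \<delta> j then (lam - u j)^2 else (u j)^2) \<ge> (\<Sum>j<8. (lam^2/2) * (if \<delta> j then 1 else 0) - (u j)^2)"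
    by (rule sum_mono) (rule t)
  have B: "(\<Sum>j<8. (lam^2/2) * (if \<delta> j then 1 else 0) - (u j)^2) =
     (lam^2/2) * real (\<Sum>j<8. if \<delta> j then 1 else 0::nat) - (\<Sum>j<8. (u j)^2)"
    by (simp only: sum_subtractf sum_distrib_left of_nat_sum, simp, rule sum.cong, auto)
  have C: "(lam^2/2) * real (\<Sum>j<8. if \<delta> j then 1 else 0::nat) - (\<Sum>j<8. (u j)^2) \<ge> (lam^2/2) * 4 - (\<Sum>j<8. (u j)^2)"
  proof -
    have "real (4::nat) \<le> real (\<Sum>j<8. if \<delta> j then 1 else 0::nat)" using W by linarith
    then show ?thesis by (intro diff_right_mono mult_left_mono) auto
  qed
  show ?thesis using A B C D by linarith
qed

definition beta :: "nat list \<Rightarrow> nat \<Rightarrow> nat" where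
  "beta k j = (\<Sum>i<4. k ! i * Hmat ! i ! j) mod 2"

lemma bin: "(a::nat) \<le> 1 \<Longrightarrow> a = 0 \<or> a = 1" by auto

lemma beta_expl: "beta [k0,k1,k2,k3] j = (k0 * Hmat!0!j + k1 * Hmat!1!j + k2 * Hmat!2!j + k3 * Hmat!3!j) mod 2"
  unfolding beta_def by (simp add: eval_nat_numeral)

lemma sum8: "(\<Sum>j<8. f j) = f (0::nat) + f 1 + f 2 + f 3 + f 4 + f 5 + f 6 + (f 7 :: 'a::comm_monoid_add)"
  by (simp add: eval_nat_numeral add_ac)

lemma comb:
  assumes "k0 \<le> 1" "k1 \<le> 1" "k2 \<le> 1" "k3 \<le> 1" "a0 \<le> 1" "a1 \<le> 1" "a2 \<le> 1" "a3 \<le> 1" "s \<le> 1"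
    "even (a0+a1+a2+a3)"
    "\<not> (a0 = k0 \<and> a1 = (k0+k1) mod 2 \<and> a2 = (k1+k2) mod 2 \<and> a3 = k2 \<and> s = k3)"
  shows "4 \<le> (\<Sum>j<8. if even ([a0,a0+s,a1,a1+s,a2,a2+s,a3,a3+s]!j + beta [k0,k1,k2,k3] j) then 0 else 1::nat)"
proof -
  have H: "Hmat!0 = [1,1,1,1,0,0,0,0]" "Hmat!1 = [0,0,1,1,1,1,0,0]" "Hmat!2 = [0,0,0,0,1,1,1,1]" "Hmat!3 = [0,1,0,1,0,1,0,1]"
    by (simp_all add: Hmat_def)
  show ?thesis
  using bin[OF assms(1)] bin[OF assms(2)] bin[OF assms(3)] bin[OF assms(4)] bin[OF assms(5)]
    bin[OF assms(6)] bin[OF assms(7)] bin[OF assms(8)] bin[OF assms(9)] assms(10,11)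
  unfolding sum8 beta_expl H
  by (elim disjE; simp)
qed

lemma comb0:
  assumes "k0 \<le> 1" "k1 \<le> 1" "k2 \<le> 1" "k3 \<le> 1" "j < 8"
  shows "even ([k0,k0+k3,(k0+k1) mod 2,(k0+k1) mod 2+k3,(k1+k2) mod 2,(k1+k2) mod 2+k3,k2,k2+k3]!j + beta [k0,k1,k2,k3] j)"
proof -
  have H: "Hmat!0 = [1,1,1,1,0,0,0,0]" "Hmat!1 = [0,0,1,1,1,1,0,0]" "Hmat!2 = [0,0,0,0,1,1,1,1]" "Hmat!3 = [0,1,0,1,0,1,0,1]"
    by (simp_all add: Hmat_def)
  have "j = 0 \<or> j = 1 \<or> j = 2 \<or> j = 3 \<or> j = 4 \<or> j = 5 \<or> j = 6 \<or> j = 7" using assms(5) by auto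
  then show ?thesis
  using bin[OF assms(1)] bin[OF assms(2)] bin[OF assms(3)] bin[OF assms(4)] unfolding beta_expl H
  by (elim disjE; simp)
qed
lemma weightL':
  fixes u :: "nat \<Rightarrow> real" and ev :: "nat \<Rightarrow> bool"
  assumes D: "(\<Sum>j<8. (u j)^2) < lam^2" and W: "4 \<le> (\<Sum>j<8. if ev j then 0 else 1::nat)"
  shows "(\<Sum>j<8. (u j)^2) < (\<Sum>j<8. if ev j then (u j)^2 else (lam - u j)^2)"
proof -
  have e1: "(\<Sum>j<8. if \<not> ev j then 1 else 0::nat) = (\<Sum>j<8. if ev j then 0 else 1)" by (rule sum.cong) auto
  have e2: "(\<Sum>j<8. if \<not> ev j then (lam - u j)^2 else (u j)^2) = (\<Sum>j<8. if ev j then (u j)^2 else (lam - u j)^2)"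
    by (rule sum.cong) auto
  show ?thesis using weightL[of u lam "\<lambda>j. \<not> ev j"] D W unfolding e1 e2 by blast
qed


theorem theorem1:
  fixes lam :: real and k1 :: "nat list" and v2 :: "real list"
  assumes "lam > 0"
    and "length k1 = 4" and "set k1 \<subseteq> {0, 1}"
    and "length v2 = 8"
    and "normQ2 (2 * lam) (map2 (-) v2 (encodeE8 lam k1)) < lam"
  shows "decodeE8 lam v2 = k1"
proof -
  note lam = assms(1)
  define q0 where "q0 = k1!0"
  define q1 where "q1 = k1!1"
  define q2 where "q2 = k1!2"
  define q3 where "q3 = k1!3"
  have K: "k1 = [q0,q1,q2,q3]"
  proof (rule nth_equalityI)
    show "length k1 = length [q0,q1,q2,q3]" using assms(2) by simp
    fix i assume "i < length k1"
    then have "i = 0 \<or> i = 1 \<or> i = 2 \<or> i = 3" using assms(2) by auto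
    then show "k1 ! i = [q0,q1,q2,q3] ! i" unfolding q0_def q1_def q2_def q3_def by auto
  qed
  have q: "q0 \<le> 1" "q1 \<le> 1" "q2 \<le> 1" "q3 \<le> 1" using assms(3) unfolding K by auto
  define u where "u j = normQinf (2*lam) (v2!j - lam * real (beta k1 j))" for j
  define W where "W j b = (if even (b + beta k1 j) then (u j)^2 else (lam - u j)^2)" for j b
  have enc: "encodeE8 lam k1 ! j = lam * real (beta k1 j)" if "j < 8" for j
  proof -
    have "encodeE8 lam k1 ! j = (\<lambda>j. lam * real ((\<Sum>i<4. k1 ! i * Hmat ! i ! j) mod 2)) ([0..<8] ! j)"
      unfolding encodeE8_def using that by (intro nth_map) simp
    also have "\<dots> = lam * real (beta k1 j)" using that unfolding beta_def by (simp only: nth_upt) simp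
    finally show ?thesis .
  qed
  have lenE: "length (encodeE8 lam k1) = 8" unfolding encodeE8_def by simp
  have "normQ2 (2 * lam) (map2 (-) v2 (encodeE8 lam k1)) = sqrt (\<Sum>j<8. (u j)^2)"
    unfolding normQ2_def
  proof (intro arg_cong[where f=sqrt] sum.cong)
    show "{..<length (map2 (-) v2 (encodeE8 lam k1))} = {..<8}" using assms(4) lenE by simp
    fix j assume "j \<in> {..<8::nat}"
    then have j: "j < 8" by simp
    have "map2 (-) v2 (encodeE8 lam k1) ! j = v2 ! j - encodeE8 lam k1 ! j"
      using j assms(4) lenE by simp
    then show "(normQinf (2 * lam) (map2 (-) v2 (encodeE8 lam k1) ! j))\<^sup>2 = (u j)\<^sup>2"
      unfolding u_def using enc[OF j] by simp
  qed
  then have "sqrt (\<Sum>j<8. (u j)^2) < lam" using assms(5) by simp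
  then have Dlt: "(\<Sum>j<8. (u j)^2) < lam^2"
  proof -
    let ?S = "(\<Sum>j<8. (u j)^2)"
    have h: "sqrt ?S < lam" by fact
    have S0: "0 \<le> ?S" by (simp add: sum_nonneg)
    then have e: "(sqrt ?S)^2 = ?S" by simp
    have "(sqrt ?S)^2 < lam^2" using h S0 by (intro power_strict_mono) auto
    then show ?thesis unfolding e .
  qed
  have nqW: "(normQ2s (2*lam) (v2!j - lam * real b))^2 = W j b" for j b
    unfolding W_def u_def normQ2s_def by (rule nq_bits[OF lam])
  have G0: "(normQ2s (2*lam) (v2!j))^2 = W j 0" for j using nqW[of j 0] by simp
  have G1: "(normQ2s (2*lam) (v2!j - lam))^2 = W j 1" for j using nqW[of j 1] by simp
  have G2: "(normQ2s (2*lam) (v2!j - lam - lam))^2 = W j 0" for j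
  proof -
    have "W j 2 = W j 0" unfolding W_def by simp
    then show ?thesis using nqW[of j 2] by (simp add: algebra_simps)
  qed
  have W2: "W j (Suc (Suc 0)) = W j 0" for j unfolding W_def by simp
  define x' where "x' = map2 (\<lambda>a c. a - lam * c) v2 cvec"
  have x'e: "x' ! (2*i) = v2 ! (2*i)" "x' ! (2*i+1) = v2 ! (2*i+1) - lam" if "i < 4" for i
    using that assms(4) unfolding x'_def cvec_def by (auto simp: less_Suc_eq eval_nat_numeral)
  have cc0: "cc lam v2 i a = W (2*i) a + W (2*i+1) a" if "a \<le> 1" for i a
    using bin[OF that] unfolding cc_def using G0 G1 by auto
  have cc1: "cc lam x' i a = W (2*i) a + W (2*i+1) (a+1)" if "i < 4" "a \<le> 1" for i a
    using bin[OF that(2)] unfolding cc_def using G0 G1 G2 W2 x'e[OF that(1)] by auto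
  define Cst where "Cst s a0 a1 a2 a3 = W 0 a0 + W 1 (a0+s) + W 2 a1 + W 3 (a1+s) + W 4 a2 + W 5 (a2+s) + W 6 a3 + W 7 (a3+s)"
    for s a0 a1 a2 a3 :: nat
  have Csum: "Cst s a0 a1 a2 a3 = (\<Sum>j<8. W j ([a0,a0+s,a1,a1+s,a2,a2+s,a3,a3+s]!j))" for s a0 a1 a2 a3
    unfolding Cst_def sum8 by simp
  define p0 where "p0 = q0"
  define p1 where "p1 = (q0+q1) mod 2"
  define p2 where "p2 = (q1+q2) mod 2"
  define p3 where "p3 = q2"
  have CD: "Cst q3 p0 p1 p2 p3 = (\<Sum>j<8. (u j)^2)"
    unfolding Csum
  proof (rule sum.cong)
    fix j assume "j \<in> {..<8::nat}"
    then show "W j ([p0, p0 + q3, p1, p1 + q3, p2, p2 + q3, p3, p3 + q3] ! j) = (u j)^2"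
      unfolding W_def K p0_def p1_def p2_def p3_def using comb0[OF q] by auto
  qed simp
  have Cgt: "(\<Sum>j<8. (u j)^2) < Cst s a0 a1 a2 a3"
    if a: "a0 \<le> 1" "a1 \<le> 1" "a2 \<le> 1" "a3 \<le> 1" "s \<le> 1" "even (a0+a1+a2+a3)"
      "\<not> (a0 = p0 \<and> a1 = p1 \<and> a2 = p2 \<and> a3 = p3 \<and> s = q3)" for s a0 a1 a2 a3
  proof -
    have "4 \<le> (\<Sum>j<8. if even ([a0,a0+s,a1,a1+s,a2,a2+s,a3,a3+s]!j + beta k1 j) then 0 else 1::nat)"
      unfolding K using comb[OF q a(1-6)] a(7) unfolding p0_def p1_def p2_def p3_def by blast
    from weightL'[OF Dlt this] show ?thesis unfolding Csum W_def .
  qed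
  obtain K0 T0 where d0: "decodeC lam v2 = (K0, T0)" by (metis surj_pair)
  obtain K1 T1 where d1: "decodeC lam x' = (K1, T1)" by (metis surj_pair)
  note s0 = decodeC_spec[OF d0] and s1 = decodeC_spec[OF d1]
  have s0l: "length K0 = 4" and s0b: "\<forall>i<4. K0!i \<le> 1" and s0e: "even (K0!0+K0!1+K0!2+K0!3)"
    and s0T: "T0 = cc lam v2 0 (K0!0) + cc lam v2 1 (K0!1) + cc lam v2 2 (K0!2) + cc lam v2 3 (K0!3)"
    and s0m: "\<forall>a0 a1 a2 a3. a0 \<le> 1 \<longrightarrow> a1 \<le> 1 \<longrightarrow> a2 \<le> 1 \<longrightarrow> a3 \<le> 1 \<longrightarrow> even (a0+a1+a2+a3) \<longrightarrow>
        T0 \<le> cc lam v2 0 a0 + cc lam v2 1 a1 + cc lam v2 2 a2 + cc lam v2 3 a3"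
    using s0 by blast+
  have s1l: "length K1 = 4" and s1b: "\<forall>i<4. K1!i \<le> 1" and s1e: "even (K1!0+K1!1+K1!2+K1!3)"
    and s1T: "T1 = cc lam x' 0 (K1!0) + cc lam x' 1 (K1!1) + cc lam x' 2 (K1!2) + cc lam x' 3 (K1!3)"
    and s1m: "\<forall>a0 a1 a2 a3. a0 \<le> 1 \<longrightarrow> a1 \<le> 1 \<longrightarrow> a2 \<le> 1 \<longrightarrow> a3 \<le> 1 \<longrightarrow> even (a0+a1+a2+a3) \<longrightarrow>
        T1 \<le> cc lam x' 0 a0 + cc lam x' 1 a1 + cc lam x' 2 a2 + cc lam x' 3 a3"
    using s1 by blast+
  have b0: "K0!0 \<le> 1" "K0!1 \<le> 1" "K0!2 \<le> 1" "K0!3 \<le> 1" using s0b by simp_all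
  have b1: "K1!0 \<le> 1" "K1!1 \<le> 1" "K1!2 \<le> 1" "K1!3 \<le> 1" using s1b by simp_all
  have i4: "(0::nat) < 4" "(1::nat) < 4" "(2::nat) < 4" "(3::nat) < 4" by simp_all
  have pb: "p0 \<le> 1" "p1 \<le> 1" "p2 \<le> 1" "p3 \<le> 1" "even (p0+p1+p2+p3)"
    unfolding p0_def p1_def p2_def p3_def using q by auto
  have T0e: "T0 = Cst 0 (K0!0) (K0!1) (K0!2) (K0!3)"
    using s0T cc0[OF b0(1), of 0] cc0[OF b0(2), of 1] cc0[OF b0(3), of 2] cc0[OF b0(4), of 3]
    unfolding Cst_def by simp
  have T0le: "T0 \<le> Cst 0 a0 a1 a2 a3" if a: "a0 \<le> 1" "a1 \<le> 1" "a2 \<le> 1" "a3 \<le> 1" "even (a0+a1+a2+a3)" for a0 a1 a2 a3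
    using s0m[rule_format, OF a] cc0[OF a(1), of 0] cc0[OF a(2), of 1] cc0[OF a(3), of 2] cc0[OF a(4), of 3]
    unfolding Cst_def by simp
  have T1e: "T1 = Cst 1 (K1!0) (K1!1) (K1!2) (K1!3)"
    using s1T cc1[OF i4(1) b1(1)] cc1[OF i4(2) b1(2)] cc1[OF i4(3) b1(3)] cc1[OF i4(4) b1(4)]
    unfolding Cst_def by simp
  have T1le: "T1 \<le> Cst 1 a0 a1 a2 a3" if a: "a0 \<le> 1" "a1 \<le> 1" "a2 \<le> 1" "a3 \<le> 1" "even (a0+a1+a2+a3)" for a0 a1 a2 a3
    using s1m[rule_format, OF a] cc1[OF i4(1) a(1)] cc1[OF i4(2) a(2)] cc1[OF i4(3) a(3)] cc1[OF i4(4) a(4)]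
    unfolding Cst_def by simp
  have K0l: "K0 = [K0!0, K0!1, K0!2, K0!3]"
  proof (rule nth_equalityI)
    show "length K0 = length [K0!0, K0!1, K0!2, K0!3]" using s0l by simp
    fix i assume "i < length K0"
    then have "i = 0 \<or> i = 1 \<or> i = 2 \<or> i = 3" using s0l by auto
    then show "K0 ! i = [K0!0, K0!1, K0!2, K0!3] ! i" by auto
  qed
  have K1l: "K1 = [K1!0, K1!1, K1!2, K1!3]"
  proof (rule nth_equalityI)
    show "length K1 = length [K1!0, K1!1, K1!2, K1!3]" using s1l by simp
    fix i assume "i < length K1"
    then have "i = 0 \<or> i = 1 \<or> i = 2 \<or> i = 3" using s1l by auto
    then show "K1 ! i = [K1!0, K1!1, K1!2, K1!3] ! i" by auto
  qed
  have out: "[p0, (p1 + p0) mod 2, p3, q3] = k1"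
  proof -
    have "q0 = 0 \<or> q0 = 1" "q1 = 0 \<or> q1 = 1" using q by auto
    then have "((q0 + q1) mod 2 + q0) mod 2 = q1" by auto
    then show ?thesis unfolding K p0_def p1_def p3_def by simp
  qed
  have dec: "decodeE8 lam v2 = (let kb = (if T1 < T0 then K1 else K0) in [kb ! 0, (kb ! 1 + kb ! 0) mod 2, kb ! 3, if T1 < T0 then 1 else 0])"
    unfolding decodeE8_def using d0 d1 unfolding x'_def by (simp add: Let_def)
  have one: "(1::nat) \<le> 1" and zero: "(0::nat) \<le> 1" by simp_all
  show ?thesis
  proof (cases "q3 = 0")
    case True
    have T0D: "T0 \<le> (\<Sum>j<8. (u j)^2)" using T0le[OF pb] CD True by simp
    have "K0!0 = p0 \<and> K0!1 = p1 \<and> K0!2 = p2 \<and> K0!3 = p3"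
    proof (rule ccontr)
      assume "\<not> ?thesis"
      then have "\<not> (K0!0 = p0 \<and> K0!1 = p1 \<and> K0!2 = p2 \<and> K0!3 = p3 \<and> 0 = q3)" by blast
      from Cgt[OF b0 zero s0e this] T0e T0D show False by linarith
    qed
    then have K0p: "K0 = [p0,p1,p2,p3]" using K0l by simp
    have "\<not> (K1!0 = p0 \<and> K1!1 = p1 \<and> K1!2 = p2 \<and> K1!3 = p3 \<and> 1 = q3)" using True by simp
    from Cgt[OF b1 one s1e this] T1e T0D have "\<not> T1 < T0" by linarith
    then show ?thesis using out True dec K0p by simp
  next
    case False
    then have q31: "q3 = 1" using q by auto
    have T1D: "T1 \<le> (\<Sum>j<8. (u j)^2)" using T1le[OF pb] CD q31 by simp
    have "K1!0 = p0 \<and> K1!1 = p1 \<and> K1!2 = p2 \<and> K1!3 = p3"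
    proof (rule ccontr)
      assume "\<not> ?thesis"
      then have "\<not> (K1!0 = p0 \<and> K1!1 = p1 \<and> K1!2 = p2 \<and> K1!3 = p3 \<and> 1 = q3)" by blast
      from Cgt[OF b1 one s1e this] T1e T1D show False by linarith
    qed
    then have K1p: "K1 = [p0,p1,p2,p3]" using K1l by simp
    have "\<not> (K0!0 = p0 \<and> K0!1 = p1 \<and> K0!2 = p2 \<and> K0!3 = p3 \<and> 0 = q3)" using q31 by simp
    from Cgt[OF b0 zero s0e this] T0e T1D have "T1 < T0" by linarith
    then show ?thesis using out q31 dec K1p by simp
  qed
qed

end
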